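(* Let $\{\gamma_k\}$ be strictly positive numbers with $\gamma_k\to\infty$, $\{g_k\}$ probability generating functions, $G_k(z)=k\gamma_k[g_k(e^{-z/k})-e^{-z/k}]$ for $z\ge0$, and $$v_k(t,\lambda)=-k\log g_k^{[\gamma_kt]}(e^{-\lambda/k}),\qquad t,\lambda\ge0,$$ where $g_k^n$ is the $n$-fold iterate of $g_k$ ($g_k^0(z)=z$) and $[\cdot]$ is the integer part. If $\{G_k\}$ is uniformly Lipschitz on $[0,1]$, then there are constants $B,N\ge0$ such that $v_k(t,\lambda)\le\lambda e^{Bt}$ for all $t,\lambda\ge0$ and all $k\ge N$. *)

theory Defs
  imports "HOL-Analysis.Analysis"
begin

definition prob_dist :: "(nat \<Rightarrow> real) \<Rightarrow> bool" where
  "prob_dist p \<longleftrightarrow> (\<forall>n. p n \<ge> 0) \<and> p sums 1"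

definition pgf :: "(nat \<Rightarrow> real) \<Rightarrow> real \<Rightarrow> real" where
  "pgf p s = (\<Sum>n. p n * s ^ n)"

end

theory Submission
  imports Defs
begin

lemma pd_summable:
  assumes "prob_dist p" "0 \<le> s" "s \<le> 1"
  shows "summable (\<lambda>n. p n * s ^ n)"
proof (rule summable_comparison_test[where g = p])
  show "summable p" using assms(1) unfolding prob_dist_def by (auto simp: sums_iff)
  show "\<exists>N. \<forall>n\<ge>N. norm (p n * s ^ n) \<le> p n"
    using assms by (auto simp: prob_dist_def abs_mult intro!: mult_left_le power_le_one)
qed

lemma pd_sums:
  assumes "prob_dist p" "0 \<le> s" "s \<le> 1"
  shows "(\<lambda>n. p n * s ^ n) sums pgf p s"
  using pd_summable[OF assms] unfolding pgf_def by (simp add: summable_sums)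

lemma pgf_nonneg:
  assumes "prob_dist p" "0 \<le> s" "s \<le> 1"
  shows "0 \<le> pgf p s"
  unfolding pgf_def using assms
  by (intro suminf_nonneg pd_summable) (auto simp: prob_dist_def)

lemma pgf_le1:
  assumes "prob_dist p" "0 \<le> s" "s \<le> 1"
  shows "pgf p s \<le> 1"
proof -
  have "pgf p s \<le> suminf p"
    unfolding pgf_def using assms
    by (intro suminf_le pd_summable)
       (auto simp: prob_dist_def sums_iff intro!: mult_left_le power_le_one)
  also have "suminf p = 1" using assms(1) by (auto simp: prob_dist_def sums_iff)
  finally show ?thesis .
qed

lemma pgf_one:
  assumes "prob_dist p"
  shows "pgf p 1 = 1"
  using assms by (auto simp: prob_dist_def pgf_def sums_iff)

lemma pgf_pos:
  assumes "prob_dist p" "0 < s" "s \<le> 1"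
  shows "0 < pgf p s"
proof -
  have "\<exists>i. p i \<noteq> 0"
  proof (rule ccontr)
    assume "\<not> ?thesis"
    hence "p = (\<lambda>_. 0)" by auto
    with assms(1) show False by (auto simp: prob_dist_def sums_iff)
  qed
  then obtain i where i: "p i > 0" using assms(1) unfolding prob_dist_def
    by (metis less_eq_real_def)
  show ?thesis unfolding pgf_def
    by (rule suminf_pos2[where i=i]) (use assms i pd_summable in \<open>auto simp: prob_dist_def\<close>)
qed

lemma pgf_jensen:
  assumes pd: "prob_dist p" and s: "0 < s" "s \<le> 1" and a: "1 \<le> a"
  shows "pgf p s powr a \<le> pgf p (s powr a)"
proof -
  define b where "b = 1 / a"
  have b: "0 < b" "b \<le> 1" "a * b = 1" using a by (auto simp: b_def)
  define z where "z n = (s powr a) ^ n" for n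
  have sa: "0 < s powr a" "s powr a \<le> 1" using s a by (auto intro: powr_le1)
  define M where "M = pgf p (s powr a)"
  have M: "0 < M" using pgf_pos[OF pd sa] by (simp add: M_def)
  have zpos: "0 < z n" for n using sa by (simp add: z_def)
  have zb: "z n powr b = s ^ n" for n
  proof -
    have "z n = s powr (a * real n)"
      using s by (simp add: z_def powr_realpow[symmetric] powr_powr)
    hence "z n powr b = s powr (a * b * real n)" using s by (simp add: powr_powr mult_ac)
    also have "\<dots> = s ^ n" using s b by (simp add: powr_realpow)
    finally show ?thesis .
  qed
  have young: "s ^ n * M powr (1 - b) \<le> b * z n + (1 - b) * M" for n
    using Youngs_inequality_0[of b "1 - b" "z n" M] b zpos M zb by simp
  have zs: "(\<lambda>n. p n * z n) sums M"
    unfolding z_def M_def using pd_sums[OF pd] sa by auto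
  have p1: "p sums 1" using pd by (simp add: prob_dist_def)
  have S: "(\<lambda>n. p n * (b * z n + (1 - b) * M)) sums (b * M + (1 - b) * M * 1)"
  proof -
    have "(\<lambda>n. b * (p n * z n) + (1 - b) * M * p n) sums (b * M + (1 - b) * M * 1)"
      by (intro sums_add sums_mult zs p1)
    thus ?thesis by (simp add: algebra_simps)
  qed
  have L: "(\<lambda>n. p n * s ^ n * M powr (1 - b)) sums (pgf p s * M powr (1 - b))"
    using sums_mult2[OF pd_sums[OF pd] ] s by auto
  have "pgf p s * M powr (1 - b) \<le> b * M + (1 - b) * M * 1"
  proof (rule sums_le[OF _ L S])
    fix n show "p n * s ^ n * M powr (1 - b) \<le> p n * (b * z n + (1 - b) * M)"
      using young[of n] pd by (simp add: prob_dist_def mult.assoc mult_left_mono)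
  qed
  hence "pgf p s * M powr (1 - b) \<le> M" by (simp add: algebra_simps)
  hence "pgf p s \<le> M / M powr (1 - b)" using M by (simp add: field_simps)
  also have "\<dots> = M powr b" using M by (simp add: powr_diff)
  finally have "pgf p s powr a \<le> (M powr b) powr a"
    using pgf_nonneg[OF pd] s a by (intro powr_mono2) auto
  also have "\<dots> = M" using M b by (simp add: powr_powr mult.commute)
  finally show ?thesis by (simp add: M_def)
qed


lemma step_near:
  fixes k c L gam y :: real and q :: "nat \<Rightarrow> real"
  assumes pd: "prob_dist q" and k: "1 \<le> k" and gam: "0 < gam"
    and c: "c = L * exp 2 / gam" "c \<le> 1" and L: "0 \<le> L"
    and y: "0 \<le> y" "y \<le> 1"
    and lip: "pgf q (exp (- y / k)) \<ge> exp (- y / k) - L * y / (k * gam)"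
  shows "pgf q (exp (- y / k)) \<ge> exp (- ((1 + c) * y / k))"
proof -
  have c0: "0 \<le> c" using c L gam by simp
  have e1: "exp (- y / k) = exp (- ((1 + c) * y / k)) * exp (c * y / k)"
  proof -
    have "- y / k = - ((1 + c) * y / k) + c * y / k" by (simp add: distrib_right add_divide_distrib)
    thus ?thesis by (metis exp_add)
  qed
  have e2: "exp (c * y / k) - 1 \<ge> c * y / k" using exp_ge_add_one_self[of "c*y/k"] by linarith
  have t: "(1 + c) * y / k \<le> 2"
  proof -
    have "(1 + c) * y \<le> 2 * 1" using c0 c y by (intro mult_mono) auto
    also have "\<dots> \<le> 2 * k" using k by simp
    finally show ?thesis using k by (simp add: field_simps)
  qed
  have e3: "exp (- ((1 + c) * y / k)) \<ge> exp (-2)" using t by simp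
  have cyk: "0 \<le> c * y / k" using c0 y k by simp
  have "exp (- y / k) - exp (- ((1 + c) * y / k)) = exp (- ((1 + c) * y / k)) * (exp (c * y / k) - 1)"
    by (subst e1) (simp add: algebra_simps)
  also have "\<dots> \<ge> exp (-2) * (c * y / k)"
    using e2 e3 cyk by (intro mult_mono) auto
  finally have A: "exp (- y / k) - exp (- ((1 + c) * y / k)) \<ge> exp (-2) * (c * y / k)" .
  have "exp (-2) * (c * y / k) = L * y / (k * gam)"
    using c gam k by (simp add: field_simps exp_minus)
  with A lip show ?thesis by linarith
qed

lemma step_all:
  fixes k c :: real and q :: "nat \<Rightarrow> real"
  assumes pd: "prob_dist q" and k: "1 \<le> k" and c0: "0 \<le> c"
    and near: "\<And>y. 0 \<le> y \<Longrightarrow> y \<le> 1 \<Longrightarrow> pgf q (exp (- y / k)) \<ge> exp (- ((1 + c) * y / k))"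
    and x: "0 < x" "x \<le> 1"
  shows "pgf q x \<ge> x powr (1 + c)"
proof -
  define a where "a = - k * ln x"
  have lnx: "ln x \<le> 0" using x by simp
  have a0: "0 \<le> a" using lnx k by (simp add: a_def mult_nonneg_nonpos2 mult_le_0_iff)
  have xa: "x = exp (- a / k)" using x k by (simp add: a_def)
  show ?thesis
  proof (cases "a \<le> 1")
    case True
    have "x powr (1 + c) = exp (- ((1 + c) * a / k))"
      using x k by (simp add: powr_def a_def)
    with near[OF a0 True] xa show ?thesis by simp
  next
    case False
    define s0 where "s0 = exp (- 1 / k)"
    have s0: "0 < s0" "s0 \<le> 1" using k by (auto simp: s0_def)
    have xs: "x = s0 powr a" using x k by (simp add: s0_def powr_def a_def)
    have n1: "pgf q s0 \<ge> s0 powr (1 + c)"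
      using near[of 1] k by (simp add: s0_def powr_def)
    have "x powr (1 + c) = (s0 powr (1 + c)) powr a"
      by (simp add: xs powr_powr mult.commute)
    also have "\<dots> \<le> pgf q s0 powr a"
      using n1 a0 by (intro powr_mono2) auto
    also have "\<dots> \<le> pgf q (s0 powr a)"
      using pgf_jensen[OF pd s0] False by simp
    finally show ?thesis by (simp add: xs)
  qed
qed


theorem lemma2p1p5:
  fixes \<gamma> :: "nat \<Rightarrow> real" and p :: "nat \<Rightarrow> nat \<Rightarrow> real"
    and g :: "nat \<Rightarrow> real \<Rightarrow> real" and G :: "nat \<Rightarrow> real \<Rightarrow> real"
    and v :: "nat \<Rightarrow> real \<Rightarrow> real \<Rightarrow> real"
  assumes gamma_pos: "\<And>k. \<gamma> k > 0"
    and gamma_lim: "filterlim \<gamma> at_top sequentially"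
    and p_dist: "\<And>k. prob_dist (p k)"
    and g_def: "\<And>k. g k = pgf (p k)"
    and G_def: "\<And>k z. G k z = real k * \<gamma> k * (g k (exp (- z / real k)) - exp (- z / real k))"
    and v_def: "\<And>k t lam. v k t lam = - real k * ln ((g k ^^ nat \<lfloor>\<gamma> k * t\<rfloor>) (exp (- lam / real k)))"
    and unif_lip: "\<exists>L. \<forall>k. L-lipschitz_on {0..1} (G k)"
  shows "\<exists>B N. B \<ge> 0 \<and> N \<ge> 0 \<and>
           (\<forall>k\<ge>N. \<forall>t\<ge>0. \<forall>lam\<ge>0. v k t lam \<le> lam * exp (B * t))"
proof -
  obtain L where lip: "\<And>k. L-lipschitz_on {0..1} (G k)" using unif_lip by blast
  have L0: "0 \<le> L" using lipschitz_on_nonneg[OF lip[of 0]] .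
  define B where "B = L * exp 2"
  have B0: "0 \<le> B" using L0 by (simp add: B_def)
  have "eventually (\<lambda>k. B \<le> \<gamma> k) sequentially"
    using gamma_lim by (simp add: filterlim_at_top)
  then obtain N0 where N0: "\<And>k. k \<ge> N0 \<Longrightarrow> B \<le> \<gamma> k" by (auto simp: eventually_sequentially)
  define N where "N = max N0 1"
  have main: "v k t lam \<le> lam * exp (B * t)" if kN: "k \<ge> N" and t: "t \<ge> 0" and lam: "lam \<ge> 0" for k t lam
  proof -
    have k1: "1 \<le> real k" using kN by (simp add: N_def)
    have gk: "B \<le> \<gamma> k" using N0 kN by (simp add: N_def)
    have gp: "0 < \<gamma> k" by (rule gamma_pos)
    define c where "c = B / \<gamma> k"
    have c0: "0 \<le> c" "c \<le> 1" using B0 gk gp by (auto simp: c_def)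
    have pd: "prob_dist (p k)" by (rule p_dist)
    have G0: "G k 0 = 0" using pgf_one[OF pd] by (simp add: G_def g_def)
    have near: "pgf (p k) (exp (- y / real k)) \<ge> exp (- ((1 + c) * y / real k))"
      if y: "0 \<le> y" "y \<le> 1" for y
    proof (rule step_near[OF pd k1 gp _ c0(2) L0 y])
      show "c = L * exp 2 / \<gamma> k" by (simp add: c_def B_def)
      have "dist (G k y) (G k 0) \<le> L * dist y 0"
        using lipschitz_onD[OF lip[of k], of y 0] y by auto
      hence "G k y \<ge> - L * y" using G0 y by (simp add: dist_real_def)
      hence "real k * \<gamma> k * (pgf (p k) (exp (- y / real k)) - exp (- y / real k)) \<ge> - L * y"
        by (simp add: G_def g_def)
      moreover have "0 < real k * \<gamma> k" using k1 gp by simp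
      ultimately have "pgf (p k) (exp (- y / real k)) - exp (- y / real k) \<ge> (- L * y) / (real k * \<gamma> k)"
        by (subst pos_divide_le_eq) (auto simp: mult.commute)
      thus "pgf (p k) (exp (- y / real k)) \<ge> exp (- y / real k) - L * y / (real k * \<gamma> k)"
        by simp
    qed
    have one: "g k x \<ge> x powr (1 + c)" if "0 < x" "x \<le> 1" for x
      using step_all[OF pd k1 c0(1) near that] by (simp add: g_def)
    have iter: "\<forall>x. 0 < x \<and> x \<le> 1 \<longrightarrow>
        (g k ^^ n) x \<ge> x powr ((1 + c) ^ n) \<and> 0 < (g k ^^ n) x \<and> (g k ^^ n) x \<le> 1" for n
    proof (induction n)
      case 0 then show ?case by auto
    next
      case (Suc n)
      show ?case
      proof (intro allI impI)
        fix x :: real assume x: "0 < x \<and> x \<le> 1"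
        have gx1: "g k x \<ge> x powr (1 + c)" using one x by auto
        have gxp: "0 < g k x" using gx1 x by (smt (verit) powr_gt_zero)
        have gxl: "g k x \<le> 1" using pgf_le1[OF pd] x by (simp add: g_def)
        have IH: "(g k ^^ n) (g k x) \<ge> g k x powr ((1 + c) ^ n)"
          "0 < (g k ^^ n) (g k x)" "(g k ^^ n) (g k x) \<le> 1"
          using Suc gxp gxl by auto
        have "x powr ((1 + c) ^ Suc n) = (x powr (1 + c)) powr ((1 + c) ^ n)"
          by (simp add: powr_powr)
        also have "\<dots> \<le> g k x powr ((1 + c) ^ n)"
          using gx1 c0 by (intro powr_mono2) auto
        finally show "(g k ^^ Suc n) x \<ge> x powr ((1 + c) ^ Suc n) \<and> 0 < (g k ^^ Suc n) x \<and> (g k ^^ Suc n) x \<le> 1"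
          using IH unfolding funpow_Suc_right o_def by simp
      qed
    qed
    define n where "n = nat \<lfloor>\<gamma> k * t\<rfloor>"
    define x where "x = exp (- lam / real k)"
    have x: "0 < x" "x \<le> 1" using lam k1 by (auto simp: x_def)
    define a where "a = (1 + c) ^ n"
    have Y: "(g k ^^ n) x \<ge> x powr a" "0 < (g k ^^ n) x" using iter[of n] x by (auto simp: a_def)
    have "ln (x powr a) \<le> ln ((g k ^^ n) x)" using Y x by (subst ln_le_cancel_iff) auto
    hence "- real k * ln ((g k ^^ n) x) \<le> - real k * ln (x powr a)" using k1 by simp
    also have "\<dots> = a * lam" using x k1 by (simp add: x_def)
    finally have V: "v k t lam \<le> a * lam" by (simp add: v_def n_def x_def)
    have "a \<le> exp c ^ n" unfolding a_def using c0 by (intro power_mono) (auto simp: add.commute)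
    also have "\<dots> = exp (c * real n)" by (simp add: exp_of_nat_mult[symmetric] mult.commute)
    also have "\<dots> \<le> exp (B * t)"
    proof -
      have "real n \<le> \<gamma> k * t" using gp t by (simp add: n_def)
      hence "c * real n \<le> c * (\<gamma> k * t)" using c0 by (intro mult_left_mono) auto
      also have "\<dots> = B * t" using gp by (simp add: c_def)
      finally show ?thesis by simp
    qed
    finally have "a * lam \<le> exp (B * t) * lam" using lam by (intro mult_right_mono) auto
    with V show ?thesis by (simp add: mult.commute)
  qed
  show ?thesis using B0 main by blast
qed

end
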